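(* For all integers $k \geq 2$, $\nu_2(P_kQ_k - k) \geq 2$, i.e., $4$ divides $P_kQ_k - k$.
   Context: The Pell sequence $(P_n)_{n\ge0}$ is defined by $P_0=0$, $P_1=1$, $P_n = 2P_{n-1}+P_{n-2}$. The associated Pell sequence $(Q_n)_{n\ge0}$ is defined by $Q_0=1$, $Q_1=1$, $Q_n=2Q_{n-1}+Q_{n-2}$. For a prime $p$ and a nonzero integer $n$, $\nu_p(n)$ denotes the $p$-adic valuation of $n$, the largest nonnegative integer $j$ such that $p^j$ divides $n$ (with $\nu_p(0)=\infty$). *)

theory Defs
  imports Main
begin

fun pell :: "nat \<Rightarrow> int" where
  "pell 0 = 0"
| "pell (Suc 0) = 1"
| "pell (Suc (Suc n)) = 2 * pell (Suc n) + pell n"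

fun pell_assoc :: "nat \<Rightarrow> int" where
  "pell_assoc 0 = 1"
| "pell_assoc (Suc 0) = 1"
| "pell_assoc (Suc (Suc n)) = 2 * pell_assoc (Suc n) + pell_assoc n"

end

theory Submission
  imports Defs
begin

lemma pell4: "pell (n+4) = 12 * pell (Suc n) + 5 * pell n"
  by (simp add: numeral_eq_Suc)

lemma pell_assoc4: "pell_assoc (n+4) = 12 * pell_assoc (Suc n) + 5 * pell_assoc n"
  by (simp add: numeral_eq_Suc)

lemma all4: "(4::int) dvd (pell k * pell_assoc k - int k)"
proof (induction k rule: less_induct)
  case (less k)
  show ?case
  proof (cases "k < 4")
    case True
    then have "k = 0 \<or> k = 1 \<or> k = 2 \<or> k = 3" by auto
    then show ?thesis by (auto simp: numeral_eq_Suc)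
  next
    case False
    then obtain n where k: "k = n + 4" by (metis add.commute le_Suc_ex not_less)
    have IH: "(4::int) dvd (pell n * pell_assoc n - int n)" using less k by simp
    define a where "a = pell (Suc n)" define b where "b = pell_assoc (Suc n)"
    have "pell k * pell_assoc k - int k
        = (pell n * pell_assoc n - int n) + 4 * (36*a*b + 15*a*pell_assoc n + 15*b*pell n + 6 * pell n * pell_assoc n - 1)"
      unfolding k pell4 pell_assoc4 a_def b_def by (simp add: algebra_simps)
    then show ?thesis by (simp only:) (rule dvd_add[OF IH dvd_triv_left])
  qed
qed

theorem lemma27:
  fixes k :: nat
  assumes "k \<ge> 2"
  shows "(4::int) dvd (pell k * pell_assoc k - int k)"
  by (rule all4)

end
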